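(* Let $(X_n)$ be i.i.d. non-lattice real random variables distributed as $X$ with $\mathbb{P}(X<0)>0$, and let $(Y_n)$ be i.i.d., independent of $(X_n)$, with $\mathbb{P}(Y_1=1)=p=1-\mathbb{P}(Y_1=-1)$, $p\in[0,1)$. Assume $X\in\mathcal{S}(\gamma)$ for some $\gamma>0$ and $\mathbb{E}[e^{\gamma X}]<1/p$. Let $W$ have the stationary distribution of $W_{n+1}=(Y_nW_n+X_n)^+$, i.e. $W\stackrel{D}{=}(YW+X)^+$ with $W,Y,X$ independent. Let $S_0=0$, $S_n=X_1+\dots+X_n$, and let $N$ be independent of everything with $\mathbb{P}(N=k)=(1-p)p^k$, $k\ge0$. Then for all $x$, with $X,W,S_N$ independent, \[\mathbb{P}(W>x)=\mathbb{P}(S_N>x)+\frac{p}{1-p}\,\mathbb{P}(X+W+S_N\le x;\,S_N>x)+\mathbb{P}(X-W+S_N>x;\,S_N\le x).\]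
   Context: $X\in\mathcal{S}(\gamma)$ means: $\mathbb{P}(X>x+y)/\mathbb{P}(X>x)\to e^{-\gamma y}$ as $x\to\infty$ for each fixed $y$, and $\mathbb{P}(X_1+X_2>x)\sim 2\mathbb{E}[e^{\gamma X}]\mathbb{P}(X>x)$ for independent copies $X_1,X_2$ of $X$. *)

theory Defs
  imports "HOL-Probability.Probability" "HOL-Library.Landau_Symbols"
begin

definition tail :: "real measure \<Rightarrow> real \<Rightarrow> real" where
  "tail \<mu> x = measure \<mu> {x<..}"

text \<open>The moment E[exp(gamma X)]
  is required to be finite (implicit in the asymptotic relation).  The law of
  X1 + X2 for independent copies is the convolution mu * mu.\<close>
definition class_S :: "real \<Rightarrow> real measure \<Rightarrow> bool" where
  "class_S \<gamma> \<mu> \<longleftrightarrow>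
     (\<forall>y. ((\<lambda>x. tail \<mu> (x + y) / tail \<mu> x) \<longlongrightarrow> exp (- \<gamma> * y)) at_top) \<and>
     integrable \<mu> (\<lambda>t. exp (\<gamma> * t)) \<and>
     (\<lambda>x. tail (\<mu> \<star> \<mu>) x) \<sim>[at_top]
        (\<lambda>x. 2 * (\<integral>t. exp (\<gamma> * t) \<partial>\<mu>) * tail \<mu> x)"

definition lattice_distr :: "real measure \<Rightarrow> bool" where
  "lattice_distr \<mu> \<longleftrightarrow>
     (\<exists>a d. d > 0 \<and> measure \<mu> {a + d * of_int k | k. True} = 1)"

text \<open>Index type for the family of random variables that are assumed
  mutually independent: X_n (n >= 0), Y, W and N.\<close>
datatype rv_idx = Xi nat | Yi | Wi | Ni

definition rv_family ::
  "(nat \<Rightarrow> 'a \<Rightarrow> real) \<Rightarrow> ('a \<Rightarrow> real) \<Rightarrow> ('a \<Rightarrow> real) \<Rightarrow> ('a \<Rightarrow> nat) \<Rightarrow> rv_idx \<Rightarrow> 'a \<Rightarrow> real" where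
  "rv_family X Y W N i = (case i of Xi n \<Rightarrow> X n | Yi \<Rightarrow> Y | Wi \<Rightarrow> W | Ni \<Rightarrow> (\<lambda>\<omega>. real (N \<omega>)))"

end

theory Submission
  imports Defs
begin


lemma indep_restrict_gen:
  fixes F :: "'i \<Rightarrow> 'a \<Rightarrow> real"
  assumes "prob_space M" "prob_space.indep_vars M (\<lambda>_. borel) F UNIV" "A \<inter> B = {}"
    "f \<in> measurable (PiM A (\<lambda>_. borel)) M1" "g \<in> measurable (PiM B (\<lambda>_. borel)) M2"
  shows "prob_space.indep_var M M1 (\<lambda>\<omega>. f (\<lambda>i\<in>A. F i \<omega>)) M2 (\<lambda>\<omega>. g (\<lambda>i\<in>B. F i \<omega>))"
proof -
  interpret prob_space M by fact
  have "indep_var M1 (f \<circ> (\<lambda>\<omega>. \<lambda>i\<in>A. F i \<omega>)) M2 (g \<circ> (\<lambda>\<omega>. \<lambda>i\<in>B. F i \<omega>))"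
    by (rule indep_var_compose[OF indep_var_restrict[OF assms(2) assms(3)]]) (use assms in auto)
  then show ?thesis by (simp add: o_def)
qed

lemma indep_nn:
  fixes A B :: "'a \<Rightarrow> real" and f :: "real \<Rightarrow> real \<Rightarrow> ennreal"
  assumes P: "prob_space M" and I: "prob_space.indep_var M borel A borel B"
    and f[measurable]: "case_prod f \<in> borel_measurable (borel \<Otimes>\<^sub>M borel)"
  shows "(\<integral>\<^sup>+\<omega>. f (A \<omega>) (B \<omega>) \<partial>M) = (\<integral>\<^sup>+\<omega>. (\<integral>\<^sup>+\<omega>'. f (A \<omega>') (B \<omega>) \<partial>M) \<partial>M)"
proof -
  interpret prob_space M by fact
  have rv: "A \<in> borel_measurable M" "B \<in> borel_measurable M"
    and eq: "distr M borel A \<Otimes>\<^sub>M distr M borel B = distr M (borel \<Otimes>\<^sub>M borel) (\<lambda>x. (A x, B x))"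
    using I unfolding indep_var_distribution_eq by auto
  note rv[measurable]
  interpret DA: prob_space "distr M borel A" by (rule prob_space_distr) simp
  interpret DB: prob_space "distr M borel B" by (rule prob_space_distr) simp
  interpret pair_sigma_finite "distr M borel A" "distr M borel B" ..
  have "(\<integral>\<^sup>+\<omega>. f (A \<omega>) (B \<omega>) \<partial>M) = (\<integral>\<^sup>+z. case_prod f z \<partial>distr M (borel \<Otimes>\<^sub>M borel) (\<lambda>x. (A x, B x)))"
    by (subst nn_integral_distr) auto
  also have "\<dots> = (\<integral>\<^sup>+z. case_prod f z \<partial>(distr M borel A \<Otimes>\<^sub>M distr M borel B))"
    by (simp add: eq)
  also have "\<dots> = (\<integral>\<^sup>+ y. (\<integral>\<^sup>+ x. f x y \<partial>distr M borel A) \<partial>distr M borel B)"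
    by (subst nn_integral_snd[symmetric]) auto
  also have "\<dots> = (\<integral>\<^sup>+ y. (\<integral>\<^sup>+ \<omega>'. f (A \<omega>') y \<partial>M) \<partial>distr M borel B)"
    by (intro nn_integral_cong) (subst nn_integral_distr, auto)
  also have "\<dots> = (\<integral>\<^sup>+\<omega>. (\<integral>\<^sup>+\<omega>'. f (A \<omega>') (B \<omega>) \<partial>M) \<partial>M)"
    by (subst nn_integral_distr) auto
  finally show ?thesis .
qed



lemma nn_if:
  assumes "{\<omega>\<in>space M. P \<omega>} \<in> sets M"
  shows "(\<integral>\<^sup>+\<omega>. (if P \<omega> then 1 else 0) \<partial>M) = emeasure M {\<omega>\<in>space M. P \<omega>}"
proof -
  have "(\<integral>\<^sup>+\<omega>. (if P \<omega> then 1 else 0) \<partial>M) = (\<integral>\<^sup>+\<omega>. indicator {\<omega>\<in>space M. P \<omega>} \<omega> \<partial>M)"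
    by (intro nn_integral_cong) (auto simp: indicator_def)
  also have "\<dots> = emeasure M {\<omega>\<in>space M. P \<omega>}" using assms by simp
  finally show ?thesis .
qed

lemma N_split:
  fixes N :: "'a \<Rightarrow> nat" and Z :: "nat \<Rightarrow> 'a \<Rightarrow> real \<times> real"
  assumes P: "prob_space M"
    and I: "\<And>k. prob_space.indep_var M borel (\<lambda>\<omega>. (real (N \<omega>), 0)) borel (Z k)"
    and B: "B \<in> sets borel"
    and Ngeo: "\<And>k. measure M {\<omega> \<in> space M. N \<omega> = k} = q k"
  shows "emeasure M {\<omega>\<in>space M. Z (N \<omega>) \<omega> \<in> B} = (\<Sum>k. ennreal (q k) * emeasure M {\<omega>\<in>space M. Z k \<omega> \<in> B})"
proof -
  interpret prob_space M by fact
  have rvN: "(\<lambda>\<omega>. (real (N \<omega>), 0::real)) \<in> borel_measurable M" using indep_var_rv1[OF I] .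
  have rvZ: "\<And>k. Z k \<in> borel_measurable M" using indep_var_rv2[OF I] .
  have setN: "\<And>k. {\<omega> \<in> space M. N \<omega> = k} \<in> sets M"
  proof -
    fix k
    have "{\<omega> \<in> space M. N \<omega> = k} = (\<lambda>\<omega>. (real (N \<omega>), 0::real)) -` {(real k, 0)} \<inter> space M" by auto
    then show "{\<omega> \<in> space M. N \<omega> = k} \<in> sets M" using rvN by (simp add: measurable_sets)
  qed
  have setZ: "\<And>k. {\<omega>\<in>space M. Z k \<omega> \<in> B} \<in> sets M"
  proof -
    fix k
    have "{\<omega>\<in>space M. Z k \<omega> \<in> B} = Z k -` B \<inter> space M" by auto
    then show "{\<omega>\<in>space M. Z k \<omega> \<in> B} \<in> sets M" using rvZ B by (simp add: measurable_sets)
  qed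
  define A where "A k = {\<omega> \<in> space M. N \<omega> = k} \<inter> {\<omega>\<in>space M. Z k \<omega> \<in> B}" for k
  have "(\<Sum>k. emeasure M (A k)) = emeasure M (\<Union>k. A k)"
    by (rule suminf_emeasure) (auto simp: A_def disjoint_family_on_def setN setZ)
  also have "(\<Union>k. A k) = {\<omega>\<in>space M. Z (N \<omega>) \<omega> \<in> B}" by (auto simp: A_def)
  finally have 1: "emeasure M {\<omega>\<in>space M. Z (N \<omega>) \<omega> \<in> B} = (\<Sum>k. emeasure M (A k))" ..
  have "emeasure M (A k) = ennreal (q k) * emeasure M {\<omega>\<in>space M. Z k \<omega> \<in> B}" for k
  proof -
    have "prob ((\<lambda>x. ((real (N x), 0::real), Z k x)) -` ({(real k, 0)} \<times> B) \<inter> space M) =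
      prob ((\<lambda>\<omega>. (real (N \<omega>), 0::real)) -` {(real k, 0)} \<inter> space M) * prob (Z k -` B \<inter> space M)"
      by (rule indep_varD[OF I]) (auto simp: B)
    moreover have "(\<lambda>x. ((real (N x), 0::real), Z k x)) -` ({(real k, 0)} \<times> B) \<inter> space M = A k" by (auto simp: A_def)
    moreover have "(\<lambda>\<omega>. (real (N \<omega>), 0::real)) -` {(real k, 0)} \<inter> space M = {\<omega> \<in> space M. N \<omega> = k}" by auto
    moreover have "Z k -` B \<inter> space M = {\<omega>\<in>space M. Z k \<omega> \<in> B}" by auto
    ultimately have "prob (A k) = q k * prob {\<omega>\<in>space M. Z k \<omega> \<in> B}" using Ngeo by simp
    then show ?thesis
      by (simp add: emeasure_eq_measure ennreal_mult'' measure_nonneg flip: ennreal_mult')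
  qed
  with 1 show ?thesis by simp
qed



lemma arith1:
  fixes e1 e2 e3 :: ennreal and p :: real
  assumes p: "0 \<le> p" "p < 1"
  shows "ennreal p ^ k * (ennreal (1-p) * e1 + ennreal p * e2 + ennreal (1-p) * e3) =
    ennreal ((1-p)*p^k) * e1 + ennreal (p/(1-p)) * (ennreal((1-p)*p^k) * e2) + ennreal((1-p)*p^k) * e3"
proof -
  have 1: "ennreal p ^ k * ennreal (1 - p) = ennreal ((1 - p) * p ^ k)"
    using p by (simp add: ennreal_power ennreal_mult'' mult.commute)
  have "p / (1 - p) * ((1 - p) * p ^ k) = p ^ k * p" using p by (simp add: field_simps)
  then have 2: "ennreal p ^ k * ennreal p = ennreal (p / (1 - p)) * ennreal ((1 - p) * p ^ k)"
    using p by (simp add: ennreal_power ennreal_mult''[symmetric])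
  show ?thesis
    by (simp add: distrib_left mult.assoc[symmetric] 1 2)
qed

lemma sum3:
  fixes A B C :: "nat \<Rightarrow> ennreal"
  shows "(\<Sum>k. A k + B k + C k) = suminf A + suminf B + suminf C"
  by (simp add: suminf_add[OF summableI summableI, symmetric])

lemma fin3:
  assumes "0 \<le> a" "0 \<le> b" "0 \<le> c" "0 \<le> d"
  shows "ennreal a + ennreal d * ennreal b + ennreal c = ennreal (a + d * b + c)"
  using assms by (simp add: ennreal_plus ennreal_mult)



theorem lemma5p1:
  fixes M :: "'a measure"
    and X :: "nat \<Rightarrow> 'a \<Rightarrow> real" and Y W :: "'a \<Rightarrow> real" and N :: "'a \<Rightarrow> nat"
    and p \<gamma> :: real
  assumes "prob_space M"
    and indep: "prob_space.indep_vars M (\<lambda>_. borel) (rv_family X Y W N) UNIV"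
    and ident: "\<And>n. distr M borel (X n) = distr M borel (X 0)"
    and nonlattice: "\<not> lattice_distr (distr M borel (X 0))"
    and negpart: "measure M {\<omega> \<in> space M. X 0 \<omega> < 0} > 0"
    and p: "0 \<le> p" "p < 1"
    and Y1: "measure M {\<omega> \<in> space M. Y \<omega> = 1} = p"
    and Ym1: "measure M {\<omega> \<in> space M. Y \<omega> = -1} = 1 - p"
    and \<gamma>: "\<gamma> > 0"
    and S: "class_S \<gamma> (distr M borel (X 0))"
    and mgf: "p * (\<integral>\<omega>. exp (\<gamma> * X 0 \<omega>) \<partial>M) < 1"
    and stat: "distr M borel W = distr M borel (\<lambda>\<omega>. max 0 (Y \<omega> * W \<omega> + X 0 \<omega>))"
    and Ngeo: "\<And>k. measure M {\<omega> \<in> space M. N \<omega> = k} = (1 - p) * p ^ k"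
  shows "\<forall>x. measure M {\<omega> \<in> space M. W \<omega> > x} =
      measure M {\<omega> \<in> space M. (\<Sum>i\<in>{1..N \<omega>}. X i \<omega>) > x}
    + p / (1 - p) * measure M {\<omega> \<in> space M.
          X 0 \<omega> + W \<omega> + (\<Sum>i\<in>{1..N \<omega>}. X i \<omega>) \<le> x \<and> (\<Sum>i\<in>{1..N \<omega>}. X i \<omega>) > x}
    + measure M {\<omega> \<in> space M.
          X 0 \<omega> - W \<omega> + (\<Sum>i\<in>{1..N \<omega>}. X i \<omega>) > x \<and> (\<Sum>i\<in>{1..N \<omega>}. X i \<omega>) \<le> x}"
proof
  fix x :: real
  interpret prob_space M by fact
  define F where "F = rv_family X Y W N"
  have F: "F (Xi n) = X n" "F Yi = Y" "F Wi = W" "F Ni = (\<lambda>\<omega>. real (N \<omega>))" for n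
    by (simp_all add: F_def rv_family_def)
  have rvF: "F i \<in> borel_measurable M" for i
    using indep unfolding F_def[symmetric] indep_vars_def by auto
  have [measurable]: "X n \<in> borel_measurable M" "Y \<in> borel_measurable M" "W \<in> borel_measurable M"
     "(\<lambda>\<omega>. real (N \<omega>)) \<in> borel_measurable M" for n
    using rvF[of "Xi n"] rvF[of Yi] rvF[of Wi] rvF[of Ni] by (simp_all add: F)
  have IG: "indep_var M1 (\<lambda>\<omega>. f (\<lambda>i\<in>A. F i \<omega>)) M2 (\<lambda>\<omega>. g (\<lambda>i\<in>B. F i \<omega>))"
    if "A \<inter> B = {}" "f \<in> measurable (PiM A (\<lambda>_. borel)) M1" "g \<in> measurable (PiM B (\<lambda>_. borel)) M2"
    for A B f g and M1 M2 :: "'c measure"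
    by (rule indep_restrict_gen[OF \<open>prob_space M\<close> indep[folded F_def] that])
  define S where "S k \<omega> = (\<Sum>i\<in>{1..k}. X i \<omega>)" for k \<omega>
  have [measurable]: "S k \<in> borel_measurable M" for k unfolding S_def by measurable
  have indWX: "indep_var borel W borel (X 0)"
    using IG[of "{Wi}" "{Xi 0}" "\<lambda>h. h Wi" borel "\<lambda>h. h (Xi 0)" borel] by (simp add: F)
  have indYV1: "indep_var borel Y borel (\<lambda>\<omega>. max 0 (W \<omega> + X 0 \<omega>))"
    using IG[of "{Yi}" "{Wi, Xi 0}" "\<lambda>h. h Yi" borel "\<lambda>h. max 0 (h Wi + h (Xi 0))" borel] by (simp add: F)
  have indYV2: "indep_var borel Y borel (\<lambda>\<omega>. max 0 (X 0 \<omega> - W \<omega>))"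
    using IG[of "{Yi}" "{Wi, Xi 0}" "\<lambda>h. h Yi" borel "\<lambda>h. max 0 (h (Xi 0) - h Wi)" borel] by (simp add: F)
  have indXS: "indep_var borel (X (Suc k)) borel (S k)" for k
    using IG[of "{Xi (Suc k)}" "Xi ` {1..k}" "\<lambda>h. h (Xi (Suc k))" borel "\<lambda>h. \<Sum>i\<in>{1..k}. h (Xi i)" borel] 
    by (auto simp: F S_def[abs_def] image_iff)
  define g where "g y = prob {\<omega>\<in>space M. y < W \<omega>}" for y
  define a where "a y = prob {\<omega>\<in>space M. X 0 \<omega> + W \<omega> \<le> y}" for y
  define b where "b y = prob {\<omega>\<in>space M. y < X 0 \<omega> - W \<omega>}" for y
  define hr where "hr y = p * (if y < 0 then a y else 0) + (1-p) * (if y < 0 then 1 else b y)" for y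
  have AEY: "AE \<omega> in M. Y \<omega> = 1 \<or> Y \<omega> = -1"
  proof -
    have "prob ({\<omega> \<in> space M. Y \<omega> = 1} \<union> {\<omega> \<in> space M. Y \<omega> = -1}) = 1"
      by (subst finite_measure_Union) (auto simp: Y1 Ym1)
    from AE_prob_1[OF this] show ?thesis by eventually_elim auto
  qed
  have st: "g y = p * prob {\<omega>\<in>space M. y < W \<omega> + X 0 \<omega>} + hr y" for y
  proof -
    have "g y = measure (distr M borel W) {y<..}"
      unfolding g_def by (subst measure_distr) (auto intro!: arg_cong[where f=prob])
    also have "\<dots> = measure (distr M borel (\<lambda>\<omega>. max 0 (Y \<omega> * W \<omega> + X 0 \<omega>))) {y<..}" 
      by (simp add: stat)
    also have "\<dots> = prob {\<omega>\<in>space M. y < max 0 (Y \<omega> * W \<omega> + X 0 \<omega>)}"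
      by (subst measure_distr) (auto intro!: arg_cong[where f=prob])
    also have "\<dots> = prob ({\<omega>\<in>space M. Y \<omega> = 1 \<and> y < max 0 (W \<omega> + X 0 \<omega>)} \<union>
                           {\<omega>\<in>space M. Y \<omega> = -1 \<and> y < max 0 (X 0 \<omega> - W \<omega>)})"
      by (rule finite_measure_eq_AE) (use AEY in \<open>auto elim!: AE_mp\<close>)
    also have "\<dots> = prob {\<omega>\<in>space M. Y \<omega> = 1 \<and> y < max 0 (W \<omega> + X 0 \<omega>)} +
                     prob {\<omega>\<in>space M. Y \<omega> = -1 \<and> y < max 0 (X 0 \<omega> - W \<omega>)}"
      by (rule finite_measure_Union) auto
    also have "prob {\<omega>\<in>space M. Y \<omega> = 1 \<and> y < max 0 (W \<omega> + X 0 \<omega>)} = 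
       p * prob {\<omega>\<in>space M. y < max 0 (W \<omega> + X 0 \<omega>)}"
    proof -
      have "prob ((\<lambda>\<omega>. (Y \<omega>, max 0 (W \<omega> + X 0 \<omega>))) -` ({1} \<times> {y<..}) \<inter> space M) =
        prob (Y -` {1} \<inter> space M) * prob ((\<lambda>\<omega>. max 0 (W \<omega> + X 0 \<omega>)) -` {y<..} \<inter> space M)"
        by (rule indep_varD[OF indYV1]) auto
      moreover have "Y -` {1} \<inter> space M = {\<omega> \<in> space M. Y \<omega> = 1}" by auto
      ultimately show ?thesis using Y1 by (simp add: vimage_def Int_def conj_commute)
    qed
    also have "prob {\<omega>\<in>space M. Y \<omega> = -1 \<and> y < max 0 (X 0 \<omega> - W \<omega>)} = 
       (1-p) * prob {\<omega>\<in>space M. y < max 0 (X 0 \<omega> - W \<omega>)}"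
    proof -
      have "prob ((\<lambda>\<omega>. (Y \<omega>, max 0 (X 0 \<omega> - W \<omega>))) -` ({-1} \<times> {y<..}) \<inter> space M) =
        prob (Y -` {-1} \<inter> space M) * prob ((\<lambda>\<omega>. max 0 (X 0 \<omega> - W \<omega>)) -` {y<..} \<inter> space M)"
        by (rule indep_varD[OF indYV2]) auto
      moreover have "Y -` {-1} \<inter> space M = {\<omega> \<in> space M. Y \<omega> = -1}" by auto
      ultimately show ?thesis using Ym1 by (simp add: vimage_def Int_def conj_commute)
    qed
    also have "prob {\<omega>\<in>space M. y < max 0 (W \<omega> + X 0 \<omega>)} = 
        prob {\<omega>\<in>space M. y < W \<omega> + X 0 \<omega>} + (if y < 0 then a y else 0)"
    proof (cases "y < 0")
      case True
      have "{\<omega>\<in>space M. y < max 0 (W \<omega> + X 0 \<omega>)} = space M" using True by auto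
      then have "prob {\<omega>\<in>space M. y < max 0 (W \<omega> + X 0 \<omega>)} = 1"
        by (simp add: prob_space[symmetric])
      moreover have "prob (space M - {\<omega>\<in>space M. y < W \<omega> + X 0 \<omega>}) = 1 - prob {\<omega>\<in>space M. y < W \<omega> + X 0 \<omega>}"
        by (rule prob_compl) auto
      moreover have "space M - {\<omega>\<in>space M. y < W \<omega> + X 0 \<omega>} = {\<omega>\<in>space M. X 0 \<omega> + W \<omega> \<le> y}" by auto
      ultimately show ?thesis using True by (simp add: a_def)
    next
      case False
      then show ?thesis by (simp add: max_def) (smt (verit) Collect_cong)
    qed
    also have "prob {\<omega>\<in>space M. y < max 0 (X 0 \<omega> - W \<omega>)} = (if y < 0 then 1 else b y)"
    proof (cases "y < 0")
      case True
      have "{\<omega>\<in>space M. y < max 0 (X 0 \<omega> - W \<omega>)} = space M" using True by auto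
      then show ?thesis using True by (simp add: prob_space[symmetric])
    next
      case False
      then show ?thesis by (simp add: max_def b_def) (smt (verit) Collect_cong)
    qed
    finally show ?thesis by (simp add: hr_def algebra_simps)
  qed
  have gmono: "g y2 \<le> g y1" if "y1 \<le> y2" for y1 y2
    unfolding g_def by (rule finite_measure_mono) (use that in auto)
  have amono: "a y1 \<le> a y2" if "y1 \<le> y2" for y1 y2
    unfolding a_def by (rule finite_measure_mono) (use that in auto)
  have bmono: "b y2 \<le> b y1" if "y1 \<le> y2" for y1 y2
    unfolding b_def by (rule finite_measure_mono) (use that in auto)
  have "(\<lambda>y. - g y) \<in> borel_measurable borel" by (rule borel_measurable_mono) (auto simp: mono_def gmono)
  then have [measurable]: "g \<in> borel_measurable borel"
    using borel_measurable_uminus[of "\<lambda>y. - g y" borel] by simp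
  have [measurable]: "a \<in> borel_measurable borel" by (rule borel_measurable_mono) (auto simp: mono_def amono)
  have "(\<lambda>y. - b y) \<in> borel_measurable borel" by (rule borel_measurable_mono) (auto simp: mono_def bmono)
  then have [measurable]: "b \<in> borel_measurable borel"
    using borel_measurable_uminus[of "\<lambda>y. - b y" borel] by simp
  have [measurable]: "hr \<in> borel_measurable borel" unfolding hr_def[abs_def] by measurable
  define G where "G y = ennreal (g y)" for y
  define H where "H y = ennreal (hr y)" for y
  have [measurable]: "G \<in> borel_measurable borel" "H \<in> borel_measurable borel"
    unfolding G_def[abs_def] H_def[abs_def] by measurable
  have g01: "0 \<le> g y" "g y \<le> 1" for y unfolding g_def by auto
  have hr0: "0 \<le> hr y" for y using p unfolding hr_def a_def b_def by auto
  have transfer: "(\<integral>\<^sup>+\<omega>. f (X n \<omega>) \<partial>M) = (\<integral>\<^sup>+\<omega>. f (X 0 \<omega>) \<partial>M)" if [measurable]: "f \<in> borel_measurable borel" for f n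
  proof -
    have "(\<integral>\<^sup>+\<omega>. f (X n \<omega>) \<partial>M) = (\<integral>\<^sup>+t. f t \<partial>distr M borel (X n))" by (subst nn_integral_distr) auto
    also have "\<dots> = (\<integral>\<^sup>+t. f t \<partial>distr M borel (X 0))" by (simp add: ident[of n])
    also have "\<dots> = (\<integral>\<^sup>+\<omega>. f (X 0 \<omega>) \<partial>M)" by (subst nn_integral_distr) auto
    finally show ?thesis .
  qed
  have eqG: "G y = ennreal p * (\<integral>\<^sup>+\<omega>. G (y - X 0 \<omega>) \<partial>M) + H y" for y
  proof -
    have "ennreal (prob {\<omega>\<in>space M. y < W \<omega> + X 0 \<omega>}) = emeasure M {\<omega>\<in>space M. y < W \<omega> + X 0 \<omega>}"
      by (simp add: emeasure_eq_measure)
    also have "\<dots> = (\<integral>\<^sup>+\<omega>. (if y < W \<omega> + X 0 \<omega> then 1 else 0) \<partial>M)" by (rule nn_if[symmetric]) auto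
    also have "\<dots> = (\<integral>\<^sup>+\<omega>. (\<integral>\<^sup>+\<omega>'. (if y < W \<omega>' + X 0 \<omega> then 1 else 0) \<partial>M) \<partial>M)"
      by (rule indep_nn[OF \<open>prob_space M\<close> indWX, where f="\<lambda>a b. if y < a + b then 1 else 0"]) measurable
    also have "\<dots> = (\<integral>\<^sup>+\<omega>. G (y - X 0 \<omega>) \<partial>M)"
    proof (rule nn_integral_cong)
      fix \<omega>
      have "(\<integral>\<^sup>+\<omega>'. (if y < W \<omega>' + X 0 \<omega> then 1 else 0) \<partial>M) = emeasure M {\<omega>'\<in>space M. y < W \<omega>' + X 0 \<omega>}"
        by (rule nn_if) auto
      also have "\<dots> = G (y - X 0 \<omega>)" unfolding G_def g_def
        by (simp add: emeasure_eq_measure) (smt (verit) Collect_cong)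
      finally show "(\<integral>\<^sup>+\<omega>'. (if y < W \<omega>' + X 0 \<omega> then 1 else 0) \<partial>M) = G (y - X 0 \<omega>)" .
    qed
    finally have 1: "ennreal (prob {\<omega>\<in>space M. y < W \<omega> + X 0 \<omega>}) = (\<integral>\<^sup>+\<omega>. G (y - X 0 \<omega>) \<partial>M)" .
    have "G y = ennreal (p * prob {\<omega>\<in>space M. y < W \<omega> + X 0 \<omega>}) + H y"
      unfolding G_def H_def st[of y] using p hr0 by (simp add: ennreal_plus)
    then show ?thesis using p by (simp add: ennreal_mult 1)
  qed
  define Q where "Q k = (\<integral>\<^sup>+\<omega>. G (x - S k \<omega>) \<partial>M)" for k
  define R where "R k = (\<integral>\<^sup>+\<omega>. H (x - S k \<omega>) \<partial>M)" for k
  have step: "Q k = ennreal p * Q (Suc k) + R k" for k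
  proof -
    have "Q k = (\<integral>\<^sup>+\<omega>. (ennreal p * (\<integral>\<^sup>+\<omega>'. G (x - S k \<omega> - X 0 \<omega>') \<partial>M) + H (x - S k \<omega>)) \<partial>M)"
      unfolding Q_def by (subst eqG) simp
    also have "\<dots> = ennreal p * (\<integral>\<^sup>+\<omega>. (\<integral>\<^sup>+\<omega>'. G (x - S k \<omega> - X 0 \<omega>') \<partial>M) \<partial>M) + R k"
      unfolding R_def by (subst nn_integral_add) (auto simp: nn_integral_cmult)
    also have "(\<integral>\<^sup>+\<omega>. (\<integral>\<^sup>+\<omega>'. G (x - S k \<omega> - X 0 \<omega>') \<partial>M) \<partial>M) =
               (\<integral>\<^sup>+\<omega>. (\<integral>\<^sup>+\<omega>'. G (x - S k \<omega> - X (Suc k) \<omega>') \<partial>M) \<partial>M)"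
      by (intro nn_integral_cong transfer[symmetric]) measurable
    also have "\<dots> = (\<integral>\<^sup>+\<omega>. G (x - S k \<omega> - X (Suc k) \<omega>) \<partial>M)"
      by (rule indep_nn[OF \<open>prob_space M\<close> indXS, where f="\<lambda>a s. G (x - s - a)", symmetric]) measurable
    also have "\<dots> = Q (Suc k)" unfolding Q_def S_def by (simp add: algebra_simps)
    finally show ?thesis .
  qed
  have Q0: "Q 0 = G x" unfolding Q_def S_def by (simp add: emeasure_space_1)
  have Q1: "Q n \<le> 1" for n
  proof -
    have "Q n \<le> (\<integral>\<^sup>+\<omega>. 1 \<partial>M)" unfolding Q_def
      by (intro nn_integral_mono) (use g01 in \<open>auto simp: G_def\<close>)
    then show ?thesis by (simp add: emeasure_space_1)
  qed
  have iter: "G x = (\<Sum>k<n. ennreal p ^ k * R k) + ennreal p ^ n * Q n" for n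
  proof (induction n)
    case 0 then show ?case by (simp add: Q0)
  next
    case (Suc n)
    then show ?case by (simp add: step[of n] algebra_simps)
  qed
  have lim1: "(\<lambda>n. \<Sum>k<n. ennreal p ^ k * R k) \<longlonglongrightarrow> (\<Sum>k. ennreal p ^ k * R k)"
    by (rule summable_LIMSEQ) (rule summableI)
  have lim2: "(\<lambda>n. ennreal p ^ n * Q n) \<longlonglongrightarrow> 0"
  proof (rule tendsto_sandwich[of "\<lambda>_. 0" _ _ "\<lambda>n. ennreal (p ^ n)"])
    show "\<forall>\<^sub>F n in sequentially. ennreal p ^ n * Q n \<le> ennreal (p ^ n)"
    proof (intro always_eventually allI)
      fix n
      have "ennreal p ^ n * Q n \<le> ennreal p ^ n * 1" by (intro mult_left_mono Q1) auto
      then show "ennreal p ^ n * Q n \<le> ennreal (p ^ n)" using p by (simp add: ennreal_power)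
    qed
    have "(\<lambda>n. ennreal (p ^ n)) \<longlonglongrightarrow> ennreal 0"
      by (intro tendsto_ennrealI LIMSEQ_realpow_zero) (use p in auto)
    then show "(\<lambda>n. ennreal (p ^ n)) \<longlonglongrightarrow> 0" by simp
  qed auto
  have Gsum: "G x = (\<Sum>k. ennreal p ^ k * R k)"
  proof -
    have "(\<lambda>n. (\<Sum>k<n. ennreal p ^ k * R k) + ennreal p ^ n * Q n) \<longlonglongrightarrow> (\<Sum>k. ennreal p ^ k * R k) + 0"
      by (intro tendsto_add lim1 lim2)
    moreover have "(\<lambda>n. (\<Sum>k<n. ennreal p ^ k * R k) + ennreal p ^ n * Q n) = (\<lambda>n. G x)"
      using iter by simp
    ultimately have "(\<lambda>n. G x) \<longlonglongrightarrow> (\<Sum>k. ennreal p ^ k * R k) + 0" by simp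
    from LIMSEQ_unique[OF tendsto_const this] show ?thesis by simp
  qed
  define e1 where "e1 k = emeasure M {\<omega>\<in>space M. x < S k \<omega>}" for k
  define e2 where "e2 k = emeasure M {\<omega>\<in>space M. X 0 \<omega> + W \<omega> + S k \<omega> \<le> x \<and> x < S k \<omega>}" for k
  define e3 where "e3 k = emeasure M {\<omega>\<in>space M. x < X 0 \<omega> - W \<omega> + S k \<omega> \<and> S k \<omega> \<le> x}" for k
  have indAS: "indep_var borel (\<lambda>\<omega>. X 0 \<omega> + W \<omega>) borel (S k)" for k
    using IG[of "{Xi 0, Wi}" "Xi ` {1..k}" "\<lambda>h. h (Xi 0) + h Wi" borel "\<lambda>h. \<Sum>i\<in>{1..k}. h (Xi i)" borel] 
    by (auto simp: F S_def[abs_def] image_iff)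
  have indBS: "indep_var borel (\<lambda>\<omega>. X 0 \<omega> - W \<omega>) borel (S k)" for k
    using IG[of "{Xi 0, Wi}" "Xi ` {1..k}" "\<lambda>h. h (Xi 0) - h Wi" borel "\<lambda>h. \<Sum>i\<in>{1..k}. h (Xi i)" borel] 
    by (auto simp: F S_def[abs_def] image_iff)
  have Hsplit: "H (x - s) = ennreal (1-p) * (if x < s then 1 else 0) + ennreal p * (if x < s then ennreal (a (x - s)) else 0)
     + ennreal (1-p) * (if x < s then 0 else ennreal (b (x - s)))" for s
    using p unfolding H_def hr_def a_def b_def by (auto simp: ennreal_plus ennreal_mult)
  have Rsplit: "R k = ennreal (1-p) * e1 k + ennreal p * e2 k + ennreal (1-p) * e3 k" for k
  proof -
    have "R k = ennreal (1-p) * (\<integral>\<^sup>+\<omega>. (if x < S k \<omega> then 1 else 0) \<partial>M)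
       + ennreal p * (\<integral>\<^sup>+\<omega>. (if x < S k \<omega> then ennreal (a (x - S k \<omega>)) else 0) \<partial>M)
       + ennreal (1-p) * (\<integral>\<^sup>+\<omega>. (if x < S k \<omega> then 0 else ennreal (b (x - S k \<omega>))) \<partial>M)"
      unfolding R_def Hsplit
      by (simp add: nn_integral_add nn_integral_cmult)
    also have "(\<integral>\<^sup>+\<omega>. (if x < S k \<omega> then 1 else 0) \<partial>M) = e1 k"
      unfolding e1_def by (rule nn_if) auto
    also have "(\<integral>\<^sup>+\<omega>. (if x < S k \<omega> then ennreal (a (x - S k \<omega>)) else 0) \<partial>M) = e2 k"
    proof -
      have "(\<integral>\<^sup>+\<omega>. (if x < S k \<omega> then ennreal (a (x - S k \<omega>)) else 0) \<partial>M) =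
         (\<integral>\<^sup>+\<omega>. (\<integral>\<^sup>+\<omega>'. (if x < S k \<omega> \<and> X 0 \<omega>' + W \<omega>' \<le> x - S k \<omega> then 1 else 0) \<partial>M) \<partial>M)"
      proof (rule nn_integral_cong)
        fix \<omega>
        show "(if x < S k \<omega> then ennreal (a (x - S k \<omega>)) else 0) =
           (\<integral>\<^sup>+\<omega>'. (if x < S k \<omega> \<and> X 0 \<omega>' + W \<omega>' \<le> x - S k \<omega> then 1 else 0) \<partial>M)"
        proof (cases "x < S k \<omega>")
          case True
          then have "(\<integral>\<^sup>+\<omega>'. (if x < S k \<omega> \<and> X 0 \<omega>' + W \<omega>' \<le> x - S k \<omega> then 1 else 0) \<partial>M)
             = emeasure M {\<omega>'\<in>space M. X 0 \<omega>' + W \<omega>' \<le> x - S k \<omega>}"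
            by (simp add: nn_if)
          then show ?thesis using True by (simp add: a_def emeasure_eq_measure)
        qed simp
      qed
      also have "\<dots> = (\<integral>\<^sup>+\<omega>. (if x < S k \<omega> \<and> X 0 \<omega> + W \<omega> \<le> x - S k \<omega> then 1 else 0) \<partial>M)"
        by (rule indep_nn[OF \<open>prob_space M\<close> indAS, where f="\<lambda>c s. if x < s \<and> c \<le> x - s then 1 else 0", symmetric]) measurable
      also have "\<dots> = e2 k" unfolding e2_def
        by (subst nn_if) (auto intro!: arg_cong[where f="emeasure M"])
      finally show ?thesis .
    qed
    also have "(\<integral>\<^sup>+\<omega>. (if x < S k \<omega> then 0 else ennreal (b (x - S k \<omega>))) \<partial>M) = e3 k"
    proof -
      have "(\<integral>\<^sup>+\<omega>. (if x < S k \<omega> then 0 else ennreal (b (x - S k \<omega>))) \<partial>M) =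
         (\<integral>\<^sup>+\<omega>. (\<integral>\<^sup>+\<omega>'. (if \<not> x < S k \<omega> \<and> x - S k \<omega> < X 0 \<omega>' - W \<omega>' then 1 else 0) \<partial>M) \<partial>M)"
      proof (rule nn_integral_cong)
        fix \<omega>
        show "(if x < S k \<omega> then 0 else ennreal (b (x - S k \<omega>))) =
           (\<integral>\<^sup>+\<omega>'. (if \<not> x < S k \<omega> \<and> x - S k \<omega> < X 0 \<omega>' - W \<omega>' then 1 else 0) \<partial>M)"
        proof (cases "x < S k \<omega>")
          case False
          then have "(\<integral>\<^sup>+\<omega>'. (if \<not> x < S k \<omega> \<and> x - S k \<omega> < X 0 \<omega>' - W \<omega>' then 1 else 0) \<partial>M)
             = emeasure M {\<omega>'\<in>space M. x - S k \<omega> < X 0 \<omega>' - W \<omega>'}"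
            by (simp add: nn_if)
          then show ?thesis using False by (simp add: b_def emeasure_eq_measure)
        qed simp
      qed
      also have "\<dots> = (\<integral>\<^sup>+\<omega>. (if \<not> x < S k \<omega> \<and> x - S k \<omega> < X 0 \<omega> - W \<omega> then 1 else 0) \<partial>M)"
        by (rule indep_nn[OF \<open>prob_space M\<close> indBS, where f="\<lambda>c s. if \<not> x < s \<and> x - s < c then 1 else 0", symmetric]) measurable
      also have "\<dots> = e3 k" unfolding e3_def
        by (subst nn_if) (auto intro!: arg_cong[where f="emeasure M"])
      finally show ?thesis .
    qed
    finally show ?thesis .
  qed
  have indN: "indep_var borel (\<lambda>\<omega>. (real (N \<omega>), 0::real)) borel (\<lambda>\<omega>. (f (X 0 \<omega>) (W \<omega>) (S k \<omega>), S k \<omega>))"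
    if [measurable]: "(\<lambda>(u,v,w). f u v w) \<in> borel_measurable (borel \<Otimes>\<^sub>M borel \<Otimes>\<^sub>M borel)" for f k
  proof -
    have m: "(\<lambda>h. (f (h (Xi 0)) (h Wi) (\<Sum>i\<in>{1..k}. h (Xi i)), \<Sum>i\<in>{1..k}. h (Xi i))) 
       \<in> borel_measurable (PiM (insert (Xi 0) (insert Wi (Xi ` {1..k}))) (\<lambda>_. borel))"
    proof -
      have "(\<lambda>h. (\<lambda>(u,v,w). f u v w) (h (Xi 0), h Wi, \<Sum>i\<in>{1..k}. h (Xi i)))
       \<in> borel_measurable (PiM (insert (Xi 0) (insert Wi (Xi ` {1..k}))) (\<lambda>_. borel))"
        by measurable
      then show ?thesis by (simp add: borel_prod[symmetric])
    qed
    show ?thesis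
      using IG[OF _ _ m, of "{Ni}" "\<lambda>h. (h Ni, 0)"]
      by (auto simp: F S_def[abs_def] image_iff borel_prod[symmetric])
  qed
  have m1: "emeasure M {\<omega> \<in> space M. (\<Sum>i\<in>{1..N \<omega>}. X i \<omega>) > x} = (\<Sum>k. ennreal ((1 - p) * p ^ k) * e1 k)"
  proof -
    have "emeasure M {\<omega>\<in>space M. (\<lambda>k \<omega>. (S k \<omega>, S k \<omega>)) (N \<omega>) \<omega> \<in> {x<..} \<times> UNIV} 
      = (\<Sum>k. ennreal ((1 - p) * p ^ k) * emeasure M {\<omega>\<in>space M. (\<lambda>k \<omega>. (S k \<omega>, S k \<omega>)) k \<omega> \<in> {x<..} \<times> UNIV})"
      by (rule N_split[OF \<open>prob_space M\<close> indN[of "\<lambda>u v w. w"] _ Ngeo]) (auto simp: borel_prod[symmetric])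
    then show ?thesis by (simp add: S_def e1_def)
  qed
  have m2: "emeasure M {\<omega> \<in> space M.
          X 0 \<omega> + W \<omega> + (\<Sum>i\<in>{1..N \<omega>}. X i \<omega>) \<le> x \<and> (\<Sum>i\<in>{1..N \<omega>}. X i \<omega>) > x} = (\<Sum>k. ennreal ((1 - p) * p ^ k) * e2 k)"
  proof -
    have "emeasure M {\<omega>\<in>space M. (\<lambda>k \<omega>. (X 0 \<omega> + W \<omega> + S k \<omega>, S k \<omega>)) (N \<omega>) \<omega> \<in> {..x} \<times> {x<..}} 
      = (\<Sum>k. ennreal ((1 - p) * p ^ k) * emeasure M {\<omega>\<in>space M. (\<lambda>k \<omega>. (X 0 \<omega> + W \<omega> + S k \<omega>, S k \<omega>)) k \<omega> \<in> {..x} \<times> {x<..}})"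
      by (rule N_split[OF \<open>prob_space M\<close> indN[of "\<lambda>u v w. u + v + w"] _ Ngeo]) (auto simp: borel_prod[symmetric])
    then show ?thesis by (simp add: S_def e2_def)
  qed
  have m3: "emeasure M {\<omega> \<in> space M.
          X 0 \<omega> - W \<omega> + (\<Sum>i\<in>{1..N \<omega>}. X i \<omega>) > x \<and> (\<Sum>i\<in>{1..N \<omega>}. X i \<omega>) \<le> x} = (\<Sum>k. ennreal ((1 - p) * p ^ k) * e3 k)"
  proof -
    have "emeasure M {\<omega>\<in>space M. (\<lambda>k \<omega>. (X 0 \<omega> - W \<omega> + S k \<omega>, S k \<omega>)) (N \<omega>) \<omega> \<in> {x<..} \<times> {..x}} 
      = (\<Sum>k. ennreal ((1 - p) * p ^ k) * emeasure M {\<omega>\<in>space M. (\<lambda>k \<omega>. (X 0 \<omega> - W \<omega> + S k \<omega>, S k \<omega>)) k \<omega> \<in> {x<..} \<times> {..x}})"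
      by (rule N_split[OF \<open>prob_space M\<close> indN[of "\<lambda>u v w. u - v + w"] _ Ngeo]) (auto simp: borel_prod[symmetric])
    then show ?thesis by (simp add: S_def e3_def)
  qed
  have termk: "ennreal p ^ k * R k = ennreal ((1 - p) * p ^ k) * e1 k
      + ennreal (p / (1 - p)) * (ennreal ((1 - p) * p ^ k) * e2 k) + ennreal ((1 - p) * p ^ k) * e3 k" for k
    unfolding Rsplit by (rule arith1[OF p])
  have A1: "G x = (\<Sum>k. ennreal ((1 - p) * p ^ k) * e1 k)
      + ennreal (p / (1 - p)) * (\<Sum>k. ennreal ((1 - p) * p ^ k) * e2 k) + (\<Sum>k. ennreal ((1 - p) * p ^ k) * e3 k)"
    unfolding Gsum termk by (simp only: sum3 ennreal_suminf_cmult)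
  define rhs where "rhs = measure M {\<omega> \<in> space M. (\<Sum>i\<in>{1..N \<omega>}. X i \<omega>) > x}
    + p / (1 - p) * measure M {\<omega> \<in> space M.
          X 0 \<omega> + W \<omega> + (\<Sum>i\<in>{1..N \<omega>}. X i \<omega>) \<le> x \<and> (\<Sum>i\<in>{1..N \<omega>}. X i \<omega>) > x}
    + measure M {\<omega> \<in> space M.
          X 0 \<omega> - W \<omega> + (\<Sum>i\<in>{1..N \<omega>}. X i \<omega>) > x \<and> (\<Sum>i\<in>{1..N \<omega>}. X i \<omega>) \<le> x}"
  have A2: "(\<Sum>k. ennreal ((1 - p) * p ^ k) * e1 k)
      + ennreal (p / (1 - p)) * (\<Sum>k. ennreal ((1 - p) * p ^ k) * e2 k) + (\<Sum>k. ennreal ((1 - p) * p ^ k) * e3 k) = ennreal rhs"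
    unfolding rhs_def m1[symmetric] m2[symmetric] m3[symmetric] emeasure_eq_measure
    by (rule fin3) (use p in auto)
  have FIN: "G x = ennreal rhs" using A1 A2 by (rule trans)
  have nn: "0 \<le> rhs" unfolding rhs_def
    by (intro add_nonneg_nonneg mult_nonneg_nonneg measure_nonneg divide_nonneg_nonneg) (use p in auto)
  have "ennreal (g x) = ennreal rhs" using FIN by (simp only: G_def)
  then have "g x = rhs" by (rule ennreal_inj[THEN iffD1, OF g01(1) nn])
  then show "measure M {\<omega> \<in> space M. W \<omega> > x} =
      measure M {\<omega> \<in> space M. (\<Sum>i\<in>{1..N \<omega>}. X i \<omega>) > x}
    + p / (1 - p) * measure M {\<omega> \<in> space M.
          X 0 \<omega> + W \<omega> + (\<Sum>i\<in>{1..N \<omega>}. X i \<omega>) \<le> x \<and> (\<Sum>i\<in>{1..N \<omega>}. X i \<omega>) > x}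
    + measure M {\<omega> \<in> space M.
          X 0 \<omega> - W \<omega> + (\<Sum>i\<in>{1..N \<omega>}. X i \<omega>) > x \<and> (\<Sum>i\<in>{1..N \<omega>}. X i \<omega>) \<le> x}"
    by (simp only: g_def rhs_def)
qed
end
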